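(* For every epistemic transition system, every history $h$ of it, all coalitions $D\subseteq C$ with $C\neq\varnothing$ and every formula $\phi\in\Phi$: if $h\Vdash\mathsf{H}_D\phi$, then $h\Vdash\mathsf{H}_D\mathsf{K}_C\phi$.
   Context: Fix a set of agents $\mathcal{A}$; a coalition is a subset of $\mathcal{A}$. Language $\Phi$: $\phi ::= p \mid \neg\phi \mid \phi\to\phi \mid \mathsf{K}_C\phi \mid \mathsf{H}_C\phi$ ($C\subseteq\mathcal{A}$). An epistemic transition system is a tuple $(W,\{\sim_a\}_{a\in\mathcal{A}},V,M,\pi)$ with $W$ a set of states, each $\sim_a$ an equivalence relation on $W$, $V$ a nonempty set, $M\subseteq W\times V^{\mathcal{A}}\times W$, $\pi$ mapping propositional variables to subsets of $W$. For profiles $\mathbf{s}_1\in V^{C_1},\mathbf{s}_2\in V^{C_2}$ and $C\subseteq C_1\cap C_2$, $\mathbf{s}_1=_C\mathbf{s}_2$ means $(\mathbf{s}_1)_a=(\mathbf{s}_2)_a$ for all $a\in C$. A history is a sequence $(w_0,\mathbf{s}_1,w_1,\dots,\mathbf{s}_n,w_n)$, $n\ge0$, with $w_i\in W$, $\mathbf{s}_i\in V^{\mathcal{A}}$, $(w_i,\mathbf{s}_{i+1},w_{i+1})\in M$; $hd(h)$ is its last element, and $h::\mathbf{s}::w$ denotes extension. $h\approx_a h'$ iff the histories have the same length $n$, their $i$-th states are $\sim_a$-related for all $i$, and their $i$-th profiles agree at $a$ for all $i$; $h\approx_C h'$ iff $h\approx_a h'$ for all $a\in C$. Satisfaction: $h\Vdash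 p$ iff $hd(h)\in\pi(p)$; Boolean clauses standard; $h\Vdash\mathsf{K}_C\phi$ iff $h'\Vdash\phi$ for all histories $h'$ with $h\approx_C h'$; $h\Vdash\mathsf{H}_C\phi$ iff there is $\mathbf{s}\in V^C$ such that for every history $h'::\mathbf{s}'::w'$ with $h\approx_C h'$ and $\mathbf{s}=_C\mathbf{s}'$, $h'::\mathbf{s}'::w'\Vdash\phi$. *)

theory Defs
  imports Main
begin

text \<open>Agents are the elements of the type 'a (the fixed set of agents); coalitions are
  sets of agents. Action profiles are functions
  'a \<Rightarrow> 'v; a profile on a coalition C is any such function whose values on C lie in V
  (values outside C are irrelevant).\<close>

datatype ('p, 'a) form =
    Var 'p
  | Neg "('p, 'a) form"
  | Imp "('p, 'a) form" "('p, 'a) form"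
  | Know "'a set" "('p, 'a) form"
  | Hasknow "'a set" "('p, 'a) form"

text \<open>Epistemic transition system (W = UNIV :: 'w set, sim a = \<sim>_a, V, M, pi).\<close>
definition is_ets ::
  "('a \<Rightarrow> ('w \<times> 'w) set) \<Rightarrow> 'v set \<Rightarrow> ('w \<times> ('a \<Rightarrow> 'v) \<times> 'w) set \<Rightarrow> bool" where
  "is_ets sim V M \<longleftrightarrow>
     (\<forall>a. equiv UNIV (sim a)) \<and> V \<noteq> {} \<and>
     (\<forall>w s w'. (w, s, w') \<in> M \<longrightarrow> (\<forall>a. s a \<in> V))"

text \<open>A history (w0, s1, w1, ..., sn, wn) is represented as (w0, [(s1,w1),...,(sn,wn)]).\<close>
type_synonym ('w, 'a, 'v) hist = "'w \<times> (('a \<Rightarrow> 'v) \<times> 'w) list"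

fun steps_ok :: "('w \<times> ('a \<Rightarrow> 'v) \<times> 'w) set \<Rightarrow> 'w \<Rightarrow> (('a \<Rightarrow> 'v) \<times> 'w) list \<Rightarrow> bool" where
  "steps_ok M w [] = True"
| "steps_ok M w ((s, w') # xs) = ((w, s, w') \<in> M \<and> steps_ok M w' xs)"

definition is_history :: "('w \<times> ('a \<Rightarrow> 'v) \<times> 'w) set \<Rightarrow> ('w, 'a, 'v) hist \<Rightarrow> bool" where
  "is_history M h \<longleftrightarrow> steps_ok M (fst h) (snd h)"

definition hd_hist :: "('w, 'a, 'v) hist \<Rightarrow> 'w" where
  "hd_hist h = (if snd h = [] then fst h else snd (last (snd h)))"

definition ext_hist :: "('w, 'a, 'v) hist \<Rightarrow> ('a \<Rightarrow> 'v) \<Rightarrow> 'w \<Rightarrow> ('w, 'a, 'v) hist" where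
  "ext_hist h s w = (fst h, snd h @ [(s, w)])"

definition indist_agent :: "('a \<Rightarrow> ('w \<times> 'w) set) \<Rightarrow> 'a \<Rightarrow> ('w, 'a, 'v) hist \<Rightarrow> ('w, 'a, 'v) hist \<Rightarrow> bool" where
  "indist_agent sim a h h' \<longleftrightarrow>
     length (snd h) = length (snd h') \<and> (fst h, fst h') \<in> sim a \<and>
     (\<forall>i < length (snd h). (snd (snd h ! i), snd (snd h' ! i)) \<in> sim a \<and>
                            fst (snd h ! i) a = fst (snd h' ! i) a)"

definition indist :: "('a \<Rightarrow> ('w \<times> 'w) set) \<Rightarrow> 'a set \<Rightarrow> ('w, 'a, 'v) hist \<Rightarrow> ('w, 'a, 'v) hist \<Rightarrow> bool" where
  "indist sim C h h' \<longleftrightarrow> length (snd h) = length (snd h') \<and> (\<forall>a\<in>C. indist_agent sim a h h')"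

fun sat :: "('a \<Rightarrow> ('w \<times> 'w) set) \<Rightarrow> 'v set \<Rightarrow> ('w \<times> ('a \<Rightarrow> 'v) \<times> 'w) set \<Rightarrow>
            ('p \<Rightarrow> 'w set) \<Rightarrow> ('w, 'a, 'v) hist \<Rightarrow> ('p, 'a) form \<Rightarrow> bool" where
  "sat sim V M \<pi> h (Var p) = (hd_hist h \<in> \<pi> p)"
| "sat sim V M \<pi> h (Neg \<phi>) = (\<not> sat sim V M \<pi> h \<phi>)"
| "sat sim V M \<pi> h (Imp \<phi> \<psi>) = (sat sim V M \<pi> h \<phi> \<longrightarrow> sat sim V M \<pi> h \<psi>)"
| "sat sim V M \<pi> h (Know C \<phi>) =
     (\<forall>h'. is_history M h' \<and> indist sim C h h' \<longrightarrow> sat sim V M \<pi> h' \<phi>)"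
| "sat sim V M \<pi> h (Hasknow C \<phi>) =
     (\<exists>s. (\<forall>a\<in>C. s a \<in> V) \<and>
        (\<forall>h' s' w'. is_history M (ext_hist h' s' w') \<and> indist sim C h h' \<and> (\<forall>a\<in>C. s a = s' a)
            \<longrightarrow> sat sim V M \<pi> (ext_hist h' s' w') \<phi>))"

end

theory Submission
  imports Defs
begin

lemma indist_ext:
  assumes "indist sim C (ext_hist h1 s1 w1) (ext_hist h2 s2 w2)"
  shows "indist sim C h1 h2 \<and> (\<forall>a\<in>C. s1 a = s2 a)"
proof -
  have L: "length (snd h1) = length (snd h2)" using assms by (simp add: indist_def ext_hist_def)
  have "\<forall>a\<in>C. indist_agent sim a h1 h2 \<and> s1 a = s2 a"
  proof
    fix a assume "a \<in> C"
    then have I: "indist_agent sim a (ext_hist h1 s1 w1) (ext_hist h2 s2 w2)"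
      using assms by (simp add: indist_def)
    have "indist_agent sim a h1 h2"
      unfolding indist_agent_def
    proof (intro conjI allI impI)
      show "length (snd h1) = length (snd h2)" by (rule L)
      show "(fst h1, fst h2) \<in> sim a" using I by (simp add: indist_agent_def ext_hist_def)
    next
      fix i assume i: "i < length (snd h1)"
      with I have "(snd ((snd h1 @ [(s1,w1)]) ! i), snd ((snd h2 @ [(s2,w2)]) ! i)) \<in> sim a
          \<and> fst ((snd h1 @ [(s1,w1)]) ! i) a = fst ((snd h2 @ [(s2,w2)]) ! i) a"
        by (simp add: indist_agent_def ext_hist_def)
      with i L show "(snd (snd h1 ! i), snd (snd h2 ! i)) \<in> sim a"
           "fst (snd h1 ! i) a = fst (snd h2 ! i) a" by (simp_all add: nth_append)
    qed
    moreover have "s1 a = s2 a"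
    proof -
      from I have "fst ((snd h1 @ [(s1,w1)]) ! length (snd h1)) a = fst ((snd h2 @ [(s2,w2)]) ! length (snd h1)) a"
        by (simp add: indist_agent_def ext_hist_def)
      with L show ?thesis by (simp add: nth_append)
    qed
    ultimately show "indist_agent sim a h1 h2 \<and> s1 a = s2 a" by simp
  qed
  with L show ?thesis by (simp add: indist_def)
qed

lemma indist_trans:
  assumes eq: "\<forall>a. equiv UNIV (sim a)"
    and "indist sim C h1 h2" and "indist sim C h2 h3"
  shows "indist sim C h1 h3"
proof -
  have T: "\<And>a x y z. (x,y) \<in> sim a \<Longrightarrow> (y,z) \<in> sim a \<Longrightarrow> (x,z) \<in> sim a"
    using eq by (meson equiv_def transD)
  show ?thesis using assms(2,3) unfolding indist_def indist_agent_def
    by (metis T)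
qed

lemma indist_mono:
  assumes "indist sim C h1 h2" "D \<subseteq> C"
  shows "indist sim D h1 h2"
  using assms by (auto simp: indist_def)

lemma hist_split:
  assumes "snd h \<noteq> []"
  shows "h = ext_hist (fst h, butlast (snd h)) (fst (last (snd h))) (snd (last (snd h)))"
  using assms by (simp add: ext_hist_def)

theorem lemma13:
  fixes sim :: "'a \<Rightarrow> ('w \<times> 'w) set" and V :: "'v set"
    and M :: "('w \<times> ('a \<Rightarrow> 'v) \<times> 'w) set" and \<pi> :: "'p \<Rightarrow> 'w set"
    and h :: "('w, 'a, 'v) hist" and C D :: "'a set" and \<phi> :: "('p, 'a) form"
  assumes "is_ets sim V M"
    and "is_history M h"
    and "D \<subseteq> C" and "C \<noteq> {}"
    and "sat sim V M \<pi> h (Hasknow D \<phi>)"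
  shows "sat sim V M \<pi> h (Hasknow D (Know C \<phi>))"
proof -
  have eq: "\<forall>a. equiv UNIV (sim a)" using assms(1) by (simp add: is_ets_def)
  from assms(5) obtain s where sV: "\<forall>a\<in>D. s a \<in> V" and
    H: "\<And>h' s' w'. is_history M (ext_hist h' s' w') \<Longrightarrow> indist sim D h h' \<Longrightarrow> (\<forall>a\<in>D. s a = s' a)
            \<Longrightarrow> sat sim V M \<pi> (ext_hist h' s' w') \<phi>" by auto
  show ?thesis
  proof (simp, rule exI[of _ s], intro conjI sV allI impI, elim conjE)
    fix h' s' w' h''
    assume h1: "indist sim D h h'" and s1: "\<forall>a\<in>D. s a = s' a"
      and hh: "is_history M h''" and i2: "indist sim C (ext_hist h' s' w') h''"
    have "snd h'' \<noteq> []" using i2 by (auto simp: indist_def ext_hist_def)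
    then have sp: "h'' = ext_hist (fst h'', butlast (snd h'')) (fst (last (snd h''))) (snd (last (snd h'')))"
      by (rule hist_split)
    define h0 where "h0 = (fst h'', butlast (snd h''))"
    define s0 where "s0 = fst (last (snd h''))"
    define w0 where "w0 = snd (last (snd h''))"
    have sp': "h'' = ext_hist h0 s0 w0" using sp by (simp add: h0_def s0_def w0_def)
    have "indist sim D (ext_hist h' s' w') (ext_hist h0 s0 w0)"
      using indist_mono[OF i2 assms(3)] sp' by simp
    from indist_ext[OF this] have a: "indist sim D h' h0" and b: "\<forall>a\<in>D. s' a = s0 a" by auto
    have "indist sim D h h0" by (rule indist_trans[OF eq h1 a])
    moreover have "\<forall>a\<in>D. s a = s0 a" using s1 b by simp
    moreover have "is_history M (ext_hist h0 s0 w0)" using hh sp' by simp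
    ultimately have "sat sim V M \<pi> (ext_hist h0 s0 w0) \<phi>" using H by blast
    then show "sat sim V M \<pi> h'' \<phi>" using sp' by simp
  qed
qed

end
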